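(* Let $H = \{h_0 = 0_H, h_1, \dots, h_{t-1}\}$ be a finite abelian group with a fixed enumeration of its elements, and let $\boldsymbol{\lambda} = (\lambda_0,\dots,\lambda_{t-1})$ be a sequence of nonnegative integers with $k = \lambda_0 + \cdots + \lambda_{t-1}$. Suppose that for infinitely many primes $p$, every non-zero sum subset of type $\boldsymbol{\lambda}$ of $(\mathbb{Z}_p \times H) \setminus \{0_{\mathbb{Z}_p\times H}\}$ is sequenceable. Then for every positive integer $m$ all of whose prime factors are greater than $k!/2$, every non-zero sum subset of type $\boldsymbol{\lambda}$ of $(\mathbb{Z}_m \times H) \setminus \{0_{\mathbb{Z}_m\times H}\}$ is sequenceable.
   Context: For a finite subset $S$ of an abelian group with $|S| = k$, an ordering $(x_1,\dots,x_k)$ of $S$ has partial sums $(y_0,\dots,y_k)$ with $y_0 = 0$, $y_i = x_1+\cdots+x_i$. It is a sequencing if the $y_i$ are pairwise distinct, and a rotational sequencing if they are pairwise distinct except that $y_k = y_0 = 0$; $S$ is sequenceable if it has one or the other. $S$ is non-zero sum if the sum of its elements is nonzero. The type of a finite subset $S \subseteq G \times H$ is $(\lambda_0,\dots,\lambda_{t-1})$ where $\lambda_i$ is the number of elements of $S$ whose $H$-coordinate equals $h_i$. *)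

theory Defs
  imports "HOL-Computational_Algebra.Primes"
begin

text \<open>The group Z_m x H is modelled with carrier {0..<m} x UNIV, where the first
  coordinate is added modulo m and the second in the abelian group H.\<close>

definition zsum :: "nat \<Rightarrow> (nat \<times> 'h::ab_group_add) list \<Rightarrow> nat \<times> 'h" where
  "zsum m xs = ((\<Sum>x\<leftarrow>xs. fst x) mod m, (\<Sum>x\<leftarrow>xs. snd x))"

definition psums :: "nat \<Rightarrow> (nat \<times> 'h::ab_group_add) list \<Rightarrow> nat \<Rightarrow> nat \<times> 'h" where
  "psums m xs i = zsum m (take i xs)"

definition is_sequencing :: "nat \<Rightarrow> (nat \<times> 'h::ab_group_add) list \<Rightarrow> bool" where
  "is_sequencing m xs \<longleftrightarrow> distinct (map (psums m xs) [0..<length xs + 1])"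

definition is_rotational_sequencing :: "nat \<Rightarrow> (nat \<times> 'h::ab_group_add) list \<Rightarrow> bool" where
  "is_rotational_sequencing m xs \<longleftrightarrow>
     distinct (map (psums m xs) [0..<length xs]) \<and> psums m xs (length xs) = (0, 0)"

definition sequenceable :: "nat \<Rightarrow> (nat \<times> 'h::ab_group_add) set \<Rightarrow> bool" where
  "sequenceable m S \<longleftrightarrow> (\<exists>xs. distinct xs \<and> set xs = S \<and>
      (is_sequencing m xs \<or> is_rotational_sequencing m xs))"

definition nonzero_sum :: "nat \<Rightarrow> (nat \<times> 'h::ab_group_add) set \<Rightarrow> bool" where
  "nonzero_sum m S \<longleftrightarrow> ((\<Sum>x\<in>S. fst x) mod m, (\<Sum>x\<in>S. snd x)) \<noteq> (0, 0)"

definition has_type :: "(nat \<Rightarrow> 'h) \<Rightarrow> nat \<Rightarrow> (nat \<Rightarrow> nat) \<Rightarrow> (nat \<times> 'h) set \<Rightarrow> bool" where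
  "has_type e t lam S \<longleftrightarrow> (\<forall>i<t. card {x\<in>S. snd x = e i} = lam i)"

definition nonzero_elems :: "nat \<Rightarrow> (nat \<times> 'h::zero) set" where
  "nonzero_elems m = ({0..<m} \<times> UNIV) - {(0, 0)}"

end

theory Submission
  imports Defs "Jordan_Normal_Form.Determinant"
begin

lemma det_abs_bound:
  fixes A :: "int mat"
  assumes A: "A \<in> carrier_mat n n" and ent: "\<And>i j. i < n \<Longrightarrow> j < n \<Longrightarrow> A $$ (i,j) \<in> {0,1}"
  shows "\<bar>det A\<bar> \<le> fact n"
proof -
  let ?P = "{p. p permutes {0..<n}}"
  define f where "f p = (\<Prod>i = 0..<n. A $$ (i, p i))" for p
  have fb: "0 \<le> f p \<and> f p \<le> 1" if "p \<in> ?P" for p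
  proof -
    have pi: "i < n \<Longrightarrow> p i < n" for i using that permutes_in_image by fastforce
    have "0 \<le> A $$ (i, p i) \<and> A $$ (i, p i) \<le> 1" if "i \<in> {0..<n}" for i
      using ent[of i "p i"] pi that by auto
    then show ?thesis unfolding f_def by (intro conjI prod_nonneg prod_le_1) auto
  qed
  have "det A = (\<Sum>p\<in>?P. signof p * f p)" unfolding det_def'[OF A] f_def by simp
  then have "\<bar>det A\<bar> \<le> (\<Sum>p\<in>?P. \<bar>signof p * f p\<bar>)" using sum_abs by metis
  also have "\<dots> \<le> (\<Sum>p\<in>?P. 1)"
    by (rule sum_mono) (use fb in \<open>auto simp: sign_def abs_mult\<close>)
  also have "\<dots> = fact n" by (simp add: card_permutations)
  finally show ?thesis .
qed

definition subm :: "'c set list \<Rightarrow> 'c list \<Rightarrow> int mat" where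
  "subm Rl Cl = mat (length Rl) (length Cl) (\<lambda>(i,j). if Cl!j \<in> Rl!i then 1 else 0)"

lemma subm_carrier: "subm Rl Cl \<in> carrier_mat (length Rl) (length Cl)"
  by (simp add: subm_def)

lemma det_subm_empty: "det (subm [] []) = 1"
  by (simp add: det_def subm_def)

lemma mat_delete_subm:
  assumes "length Rl = r"
  shows "mat_delete (subm (Rl@[\<rho>]) Cl) r j = mat_delete (subm (Rl@[{}]) Cl) r j"
  using assms by (intro eq_matI) (auto simp: mat_delete_def subm_def nth_append)

lemma mat_delete_subm_last:
  assumes "length Rl = r" "length Cl = r"
  shows "mat_delete (subm (Rl@[\<rho>]) (Cl@[f])) r r = subm Rl Cl"
  using assms by (intro eq_matI) (auto simp: mat_delete_def subm_def nth_append)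

lemma sum_distinct_list:
  assumes "distinct Cl"
  shows "(\<Sum>s\<in>set Cl. g s) = (\<Sum>j<length Cl. g (Cl!j))"
proof -
  have "set Cl = (!) Cl ` {..<length Cl}" by (auto simp: set_conv_nth)
  moreover have "inj_on ((!) Cl) {..<length Cl}" using assms by (simp add: inj_on_nth)
  ultimately show ?thesis by (simp add: sum.reindex)
qed

lemma det01_bound:
  fixes A :: "int mat"
  assumes A: "A \<in> carrier_mat n n" and ent: "\<And>i j. i < n \<Longrightarrow> j < n \<Longrightarrow> A $$ (i,j) \<in> {0,1}"
    and n: "n \<ge> 2"
  shows "2 * \<bar>det A\<bar> \<le> fact n"
proof -
  let ?P = "{p. p permutes {0..<n}}"
  let ?E = "{p\<in>?P. evenperm p}"
  let ?O = "{p\<in>?P. \<not> evenperm p}"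
  let ?t = "Transposition.transpose (0::nat) 1"
  define f where "f p = (\<Prod>i = 0..<n. A $$ (i, p i))" for p
  have fb: "0 \<le> f p \<and> f p \<le> 1" if "p \<in> ?P" for p
  proof -
    have pi: "i < n \<Longrightarrow> p i < n" for i using that permutes_in_image by fastforce
    have "0 \<le> A $$ (i, p i) \<and> A $$ (i, p i) \<le> 1" if "i \<in> {0..<n}" for i
      using ent[of i "p i"] pi that by auto
    then show ?thesis unfolding f_def by (intro conjI prod_nonneg prod_le_1) auto
  qed
  have fin: "finite ?P" by (simp add: finite_permutations)
  have det: "det A = sum f ?E - sum f ?O"
  proof -
    have "det A = (\<Sum>p\<in>?P. signof p * f p)" unfolding det_def'[OF A] f_def by simp
    also have "\<dots> = (\<Sum>p\<in>?E. signof p * f p) + (\<Sum>p\<in>?O. signof p * f p)"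
      using fin by (subst sum.union_disjoint[symmetric]) (auto intro: sum.cong)
    also have "\<dots> = sum f ?E - sum f ?O"
      by (simp add: sign_def sum_negf)
    finally show ?thesis .
  qed
  have tP: "?t permutes {0..<n}" using n by (intro permutes_swap_id) auto
  have tinv: "?t \<circ> (?t \<circ> p) = p" for p by (auto simp: fun_eq_iff Transposition.transpose_def)
  have bij: "bij_betw (\<lambda>p. ?t \<circ> p) ?E ?O"
  proof (rule bij_betwI[where g = "\<lambda>p. ?t \<circ> p"])
    have ev: "evenperm (?t \<circ> p) = (\<not> evenperm p)" if "p \<in> ?P" for p
    proof -
      have "permutation p" using that permutation_permutes by blast
      moreover have "permutation ?t" using tP permutation_permutes by blast
      ultimately show ?thesis by (simp add: evenperm_comp evenperm_swap)
    qed
    show "(\<lambda>p. ?t \<circ> p) \<in> ?E \<rightarrow> ?O" using ev tP permutes_compose by fastforce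
    show "(\<lambda>p. ?t \<circ> p) \<in> ?O \<rightarrow> ?E" using ev tP permutes_compose by fastforce
  qed (auto simp: tinv)
  have cEO: "card ?E = card ?O" using bij bij_betw_same_card by blast
  have "card ?E + card ?O = card ?P" using fin by (subst card_Un_disjoint[symmetric]) (auto intro: arg_cong[where f=card])
  also have "\<dots> = fact n" by (simp add: card_permutations)
  finally have cs: "card ?E + card ?O = fact n" .
  have sE: "0 \<le> sum f ?E \<and> sum f ?E \<le> of_nat (card ?E)"
    using fb by (auto intro: sum_nonneg order.trans[OF sum_mono[where g="\<lambda>_. 1"]])
  have sO: "0 \<le> sum f ?O \<and> sum f ?O \<le> of_nat (card ?O)"
    using fb by (auto intro: sum_nonneg order.trans[OF sum_mono[where g="\<lambda>_. 1"]])
  have "2 * \<bar>det A\<bar> \<le> of_nat (card ?E + card ?O)" using det sE sO cEO by auto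
  then show ?thesis using cs by (metis of_nat_fact)
qed

lemma aux: assumes nc: "\<not> coprime (D::int) (int m)" and D: "D \<noteq> 0"
  shows "\<exists>q. prime q \<and> q dvd m \<and> int q dvd D"
proof -
  have g1: "gcd D (int m) \<noteq> 1" using nc coprime_iff_gcd_eq_1 by blast
  have g0: "gcd D (int m) \<noteq> 0" using D by simp
  have "\<not> is_unit (gcd D (int m))" using g1 by simp
  then obtain p where p: "p dvd gcd D (int m)" "prime p" using prime_divisor_exists g0 by blast
  have p0: "p \<ge> 0" using p(2) prime_ge_0_int by blast
  have "prime (nat p)" using p(2) by simp
  moreover have "int (nat p) dvd D" "int (nat p) dvd int m" using p p0 by auto
  ultimately show ?thesis using int_dvd_int_iff by blast
qed

lemma core:
  fixes S :: "'c set" and a :: "'c \<Rightarrow> int" and Tf :: "'c set set" and m :: nat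
  assumes m0: "m > 0" and finS: "finite S" and TS: "\<forall>T\<in>Tf. T \<subseteq> S"
    and Tdvd: "\<forall>T\<in>Tf. int m dvd (\<Sum>s\<in>T. a s)"
    and primes: "\<forall>q::nat. prime q \<and> q dvd m \<longrightarrow> 2*q > fact (card S)"
  shows "\<exists>x D. coprime D (int m) \<and> (\<forall>T\<in>Tf. (\<Sum>s\<in>T. x s) = 0) \<and> (\<forall>s\<in>S. int m dvd (x s - D * a s))"
proof -
  define good where "good r \<longleftrightarrow> (\<exists>Rl Cl. length Rl = r \<and> length Cl = r \<and> set Rl \<subseteq> Tf \<and> distinct Cl
     \<and> set Cl \<subseteq> S \<and> det (subm Rl Cl) \<noteq> 0)" for r
  have gb: "good r \<Longrightarrow> r \<le> card S" for r
    unfolding good_def by (metis card_mono distinct_card finS)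
  have g0: "good 0" unfolding good_def
    by (intro exI[of _ "[]::'c set list"] exI[of _ "[]::'c list"]) (auto simp: det_subm_empty)
  define r where "r = Max {r. good r}"
  have fin: "finite {r. good r}" using gb by (meson finite_nat_set_iff_bounded_le mem_Collect_eq)
  have "good r" unfolding r_def using fin g0 Max_in by (metis empty_iff mem_Collect_eq)
  have rmax: "good r' \<Longrightarrow> r' \<le> r" for r' unfolding r_def using fin by (simp add: Max_ge)
  from \<open>good r\<close> obtain Rl Cl where Rl: "length Rl = r" and Cl: "length Cl = r" and RT: "set Rl \<subseteq> Tf"
    and dC: "distinct Cl" and CS: "set Cl \<subseteq> S" and Dnz: "det (subm Rl Cl) \<noteq> 0"
    unfolding good_def by blast
  define N where "N = subm Rl Cl"
  define D where "D = det N"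
  have rS: "r \<le> card S" using gb \<open>good r\<close> by blast
  have Nc: "N \<in> carrier_mat r r" unfolding N_def using subm_carrier Rl Cl by metis
  have N01: "N $$ (i,j) \<in> {0,1}" if "i<r" "j<r" for i j
    using that Rl Cl by (simp add: N_def subm_def)
  have Dnz': "D \<noteq> 0" unfolding D_def N_def using Dnz .
  have Db: "\<bar>D\<bar> \<le> fact r" unfolding D_def by (rule det_abs_bound[OF Nc N01])
  have D2: "r \<ge> 2 \<Longrightarrow> 2 * \<bar>D\<bar> \<le> fact r" unfolding D_def by (rule det01_bound[OF Nc N01])
  have cop: "coprime D (int m)"
  proof (rule ccontr)
    assume nc: "\<not> coprime D (int m)"
    obtain q where q: "prime q" "q dvd m" "int q dvd D" using aux[OF nc Dnz'] by blast
    have qD': "int q \<le> \<bar>D\<bar>" using q(3) Dnz' by (intro zdvd_imp_le) auto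
    have big: "2 * q > fact (card S)" using primes q(1) q(2) by blast
    have big': "2 * int q > fact r" using big rS
      by (smt (verit, best) fact_mono int_plus mult_2 nat_int_comparison(2) of_nat_fact)
    show False
    proof (cases "r \<ge> 2")
      case True then show ?thesis using D2 big' qD' by linarith
    next
      case False
      then have "fact r = (1::int)"
        by (metis one_add_one fact_ge_1 fact_1 fact_mono not_less_eq_eq Suc_eq_plus1_left dual_order.eq_iff)
      then show ?thesis using Db qD' q(1) prime_ge_2_nat[of q] by linarith
    qed
  qed
  define cof where "cof f j = cofactor (subm (Rl@[{}]) (Cl@[f])) r j" for f j
  have Bc: "subm (Rl@[\<rho>]) (Cl@[f]) \<in> carrier_mat (Suc r) (Suc r)" for \<rho> f
    using subm_carrier[of "Rl@[\<rho>]" "Cl@[f]"] Rl Cl by simp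
  have lap: "det (subm (Rl@[\<rho>]) (Cl@[f])) = (\<Sum>j<Suc r. (if (Cl@[f])!j \<in> \<rho> then 1 else 0) * cof f j)" for \<rho> f
  proof -
    have "det (subm (Rl@[\<rho>]) (Cl@[f])) = (\<Sum>j<Suc r. subm (Rl@[\<rho>]) (Cl@[f]) $$ (r,j) * cofactor (subm (Rl@[\<rho>]) (Cl@[f])) r j)"
      using laplace_expansion_row[OF Bc, of r] by simp
    also have "\<dots> = (\<Sum>j<Suc r. (if (Cl@[f])!j \<in> \<rho> then 1 else 0) * cof f j)"
    proof (rule sum.cong[OF refl])
      fix j assume "j \<in> {..<Suc r}"
      then have "subm (Rl@[\<rho>]) (Cl@[f]) $$ (r,j) = (if (Cl@[f])!j \<in> \<rho> then 1 else 0)"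
        using Rl Cl by (simp add: subm_def nth_append)
      moreover have "cofactor (subm (Rl@[\<rho>]) (Cl@[f])) r j = cof f j"
        unfolding cof_def cofactor_def using mat_delete_subm[OF Rl, where Cl="Cl@[f]" and \<rho>=\<rho> and j=j] by simp
      ultimately show "subm (Rl@[\<rho>]) (Cl@[f]) $$ (r,j) * cofactor (subm (Rl@[\<rho>]) (Cl@[f])) r j
          = (if (Cl@[f])!j \<in> \<rho> then 1 else 0) * cof f j" by simp
    qed
    finally show ?thesis .
  qed
  define F where "F = S - set Cl"
  have detz: "det (subm (Rl@[T]) (Cl@[f])) = 0" if "T \<in> Tf" "f \<in> F" for T f
  proof (rule ccontr)
    assume "det (subm (Rl@[T]) (Cl@[f])) \<noteq> 0"
    then have "good (Suc r)" unfolding good_def using that Rl Cl RT dC CS F_def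
      by (intro exI[of _ "Rl@[T]"] exI[of _ "Cl@[f]"]) auto
    then show False using rmax by fastforce
  qed
  define z where "z f s = (\<Sum>j<Suc r. if (Cl@[f])!j = s then cof f j else 0)" for f s
  have zsum: "(\<Sum>s\<in>T. z f s) = (\<Sum>j<Suc r. (if (Cl@[f])!j \<in> T then 1 else 0) * cof f j)" if "finite T" for T f
    unfolding z_def using that by (subst sum.swap) (auto intro!: sum.cong simp: sum.delta')
  have zT: "(\<Sum>s\<in>T. z f s) = 0" if "T \<in> Tf" "f \<in> F" for T f
  proof -
    have "finite T" using TS that finS finite_subset by blast
    then show ?thesis using zsum lap detz that by simp
  qed
  have cof_rr: "cof f r = D" for f
  proof -
    have "cof f r = (-1)^(r+r) * det N"
      unfolding cof_def cofactor_def N_def using mat_delete_subm_last[OF Rl Cl] by simp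
    also have "(-1::int)^(r+r) = 1" by (simp add: mult_2[symmetric] power_mult)
    finally show ?thesis by (simp add: D_def)
  qed
  have zff: "z f f = D" if "f \<in> F" for f
  proof -
    have "z f f = (\<Sum>j<Suc r. if j = r then cof f j else 0)"
      unfolding z_def
    proof (rule sum.cong[OF refl])
      fix j assume "j \<in> {..<Suc r}"
      then show "(if (Cl@[f])!j = f then cof f j else 0) = (if j = r then cof f j else 0)"
        using that Cl nth_mem[of j Cl] by (auto simp: F_def nth_append)
    qed
    also have "\<dots> = D" using cof_rr by simp
    finally show ?thesis .
  qed
  have z0: "z f s = 0" if "s \<notin> set Cl" "s \<noteq> f" for f s
    unfolding z_def using that Cl nth_mem[of _ Cl] by (intro sum.neutral) (auto simp: nth_append)
  define x where "x s = (\<Sum>f\<in>F. a f * z f s)" for s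
  have finF: "finite F" using finS F_def by simp
  have xT: "(\<Sum>s\<in>T. x s) = 0" if "T \<in> Tf" for T
  proof -
    have "(\<Sum>s\<in>T. x s) = (\<Sum>f\<in>F. a f * (\<Sum>s\<in>T. z f s))"
      unfolding x_def by (subst sum.swap) (simp add: sum_distrib_left)
    also have "\<dots> = 0" using zT that by simp
    finally show ?thesis .
  qed
  have xF: "x s = D * a s" if "s \<in> F" for s
  proof -
    have "x s = a s * z s s + (\<Sum>f\<in>F - {s}. a f * z f s)"
      unfolding x_def using finF that by (simp add: sum.remove)
    also have "(\<Sum>f\<in>F - {s}. a f * z f s) = 0"
      using that z0 by (intro sum.neutral) (auto simp: F_def)
    finally show ?thesis using zff that by simp
  qed
  define y where "y s = x s - D * a s" for s
  have yF: "y s = 0" if "s \<in> F" for s using xF that y_def by simp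
  have yrow: "int m dvd (\<Sum>j<r. N$$(i,j) * y (Cl!j))" if "i < r" for i
  proof -
    have Ti: "Rl!i \<in> Tf" using RT Rl that nth_mem by blast
    have "(\<Sum>j<r. N$$(i,j) * y (Cl!j)) = (\<Sum>j<length Cl. (\<lambda>s. if s \<in> Rl!i then y s else 0) (Cl!j))"
      using that Rl Cl by (intro sum.cong) (auto simp: N_def subm_def)
    also have "\<dots> = (\<Sum>s\<in>set Cl. if s \<in> Rl!i then y s else 0)"
      by (rule sum_distinct_list[OF dC, symmetric])
    also have "\<dots> = (\<Sum>s\<in>set Cl \<inter> Rl!i. y s)"
      by (simp add: sum.inter_restrict)
    also have "\<dots> = (\<Sum>s\<in>Rl!i. y s)"
    proof (rule sum.mono_neutral_left)
      show "finite (Rl!i)" using Ti TS finS finite_subset by blast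
      show "\<forall>s\<in>Rl!i - set Cl \<inter> Rl!i. y s = 0" using Ti TS yF unfolding F_def by auto
    qed auto
    also have "\<dots> = (\<Sum>s\<in>Rl!i. x s) - D * (\<Sum>s\<in>Rl!i. a s)"
      unfolding y_def by (simp add: sum_subtractf sum_distrib_left)
    also have "\<dots> = - D * (\<Sum>s\<in>Rl!i. a s)" using xT Ti by simp
    finally have eq: "(\<Sum>j<r. N$$(i,j) * y (Cl!j)) = - D * (\<Sum>s\<in>Rl!i. a s)" .
    have "int m dvd (\<Sum>s\<in>Rl!i. a s)" using Tdvd Ti by blast
    then show ?thesis unfolding eq by (rule dvd_mult)
  qed
  have xC: "int m dvd y s" if sC: "s \<in> set Cl" for s
  proof -
    obtain j0 where j0: "j0 < r" "s = Cl!j0" using sC Cl by (auto simp: in_set_conv_nth)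
    have AN: "adj_mat N * N = D \<cdot>\<^sub>m 1\<^sub>m r" using adj_mat(3)[OF Nc] D_def by simp
    have Ac: "adj_mat N \<in> carrier_mat r r" using adj_mat(1)[OF Nc] .
    have e: "(\<Sum>i<r. adj_mat N $$ (j0,i) * N $$ (i,j)) = (if j = j0 then D else 0)" if "j < r" for j
    proof -
      have "(adj_mat N * N) $$ (j0,j) = (\<Sum>i<r. adj_mat N $$ (j0,i) * N $$ (i,j))"
        using Ac Nc j0 that by (simp add: scalar_prod_def atLeast0LessThan)
      then show ?thesis using AN j0 that by (auto split: if_splits)
    qed
    have "(\<Sum>i<r. adj_mat N $$ (j0,i) * (\<Sum>j<r. N$$(i,j) * y (Cl!j)))
        = (\<Sum>j<r. (\<Sum>i<r. adj_mat N $$ (j0,i) * N $$ (i,j)) * y (Cl!j))"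
      by (simp add: sum_distrib_left sum_distrib_right mult.assoc) (rule sum.swap)
    also have "\<dots> = (\<Sum>j<r. (if j = j0 then D * y (Cl!j) else 0))"
      using e by (intro sum.cong) auto
    also have "\<dots> = D * y s" using j0 by simp
    finally have "D * y s = (\<Sum>i<r. adj_mat N $$ (j0,i) * (\<Sum>j<r. N$$(i,j) * y (Cl!j)))" by simp
    moreover have "int m dvd (\<Sum>i<r. adj_mat N $$ (j0,i) * (\<Sum>j<r. N$$(i,j) * y (Cl!j)))"
      using yrow by (intro dvd_sum) (simp add: dvd_mult)
    ultimately have "int m dvd D * y s" by simp
    then show ?thesis using cop by (simp add: coprime_commute coprime_dvd_mult_right_iff)
  qed
  have "\<forall>s\<in>S. int m dvd (x s - D * a s)"
  proof
    fix s assume "s \<in> S"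
    then show "int m dvd (x s - D * a s)" using xC yF F_def y_def by (cases "s \<in> set Cl") auto
  qed
  then show ?thesis using cop xT by blast
qed


lemma nat_mod_add_iff: "((u::nat) mod m = (u + v) mod m) \<longleftrightarrow> v mod m = 0"
  by (metis add_diff_cancel_left' bot_nat_0.not_eq_extremum le_add1
    mod_eq_dvd_iff_nat mod_greater_zero_iff_not_dvd)

lemma small_dvd: "int p dvd (d::int) \<Longrightarrow> \<bar>d\<bar> < int p \<Longrightarrow> d = 0"
  by (meson dvd_abs_iff zdvd_not_zless zero_less_abs_iff)

lemma sum_nat_mod:
  assumes "p > 0"
  shows "int ((\<Sum>s\<in>T. nat (f s mod int p)) mod p) = (\<Sum>s\<in>T. f s) mod int p"
proof -
  have "int (\<Sum>s\<in>T. nat (f s mod int p)) = (\<Sum>s\<in>T. f s mod int p)"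
    using assms by (simp add: of_nat_sum)
  then have "int ((\<Sum>s\<in>T. nat (f s mod int p)) mod p) = (\<Sum>s\<in>T. f s mod int p) mod int p"
    by (metis of_nat_mod)
  also have "\<dots> = (\<Sum>s\<in>T. f s) mod int p" by (rule mod_sum_eq)
  finally show ?thesis .
qed

lemma zsum_append:
  "zsum m (u @ v) = (((\<Sum>x\<leftarrow>u. fst x) + (\<Sum>x\<leftarrow>v. fst x)) mod m, (\<Sum>x\<leftarrow>u. snd x) + (\<Sum>x\<leftarrow>v. snd x))"
  by (simp add: zsum_def)

lemma take_split: "i \<le> j \<Longrightarrow> take j xs = take i xs @ drop i (take j xs)"
  by (metis append_take_drop_id min.absorb1 take_take)

lemma psums_eq_iff:
  assumes "i \<le> j"
  shows "psums m xs i = psums m xs j \<longleftrightarrow>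
     ((\<Sum>x\<leftarrow>drop i (take j xs). fst x) mod m = 0 \<and> (\<Sum>x\<leftarrow>drop i (take j xs). snd x) = 0)"
proof -
  have "psums m xs j = zsum m (take i xs @ drop i (take j xs))"
    unfolding psums_def using take_split[OF assms] by metis
  then show ?thesis unfolding psums_def zsum_append by (simp add: zsum_def nat_mod_add_iff)
qed

lemma not_distinct_pair:
  assumes "\<not> distinct (map f [0..<n])"
  shows "\<exists>i j. i < j \<and> j < n \<and> f i = f j"
proof -
  from assms obtain i j where "i < n" "j < n" "i \<noteq> j" "f i = f j"
    by (auto simp: distinct_conv_nth)
  then show ?thesis by (metis linorder_neqE_nat)
qed

lemma sum_list_set: "distinct xs \<Longrightarrow> (\<Sum>x\<leftarrow>xs. f x) = (\<Sum>x\<in>set xs. f x)"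
  by (simp add: sum_list_distinct_conv_sum_set)


theorem theorem4p12:
  fixes e :: "nat \<Rightarrow> 'h::{ab_group_add, finite}"
    and lam :: "nat \<Rightarrow> nat" and t k m :: nat
  assumes "bij_betw e {0..<t} (UNIV :: 'h set)"
    and "e 0 = 0"
    and "k = (\<Sum>i<t. lam i)"
    and "infinite {p::nat. prime p \<and>
           (\<forall>S. S \<subseteq> nonzero_elems p \<and> nonzero_sum p S \<and> has_type e t lam S
                \<longrightarrow> sequenceable p S)}"
    and "m > 0"
    and "\<forall>q::nat. prime q \<and> q dvd m \<longrightarrow> 2 * q > fact k"
  shows "\<forall>S. S \<subseteq> nonzero_elems m \<and> nonzero_sum m S \<and> has_type e t lam S
           \<longrightarrow> sequenceable m S"
proof (intro allI impI)
  note bij = assms(1) and kdef = assms(3) and infP = assms(4) and m0 = assms(5) and primes = assms(6)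
  fix S :: "(nat \<times> 'h) set"
  assume "S \<subseteq> nonzero_elems m \<and> nonzero_sum m S \<and> has_type e t lam S"
  then have Ssub: "S \<subseteq> nonzero_elems m" and nz: "nonzero_sum m S" and ty: "has_type e t lam S" by auto
  show "sequenceable m S"
  proof (rule ccontr)
    assume ns: "\<not> sequenceable m S"
    have finS: "finite S"
    proof (rule finite_subset[OF Ssub])
      show "finite (nonzero_elems m :: (nat \<times> 'h) set)" unfolding nonzero_elems_def by simp
    qed
    have Sm: "fst s < m" "s \<noteq> (0,0)" if "s \<in> S" for s
      using Ssub that unfolding nonzero_elems_def by auto
    have cardS: "card S = k"
    proof -
      have surj: "e ` {0..<t} = UNIV" using bij by (simp add: bij_betw_def)
      have U: "S = (\<Union>i\<in>{0..<t}. {x\<in>S. snd x = e i})"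
      proof
        show "S \<subseteq> (\<Union>i\<in>{0..<t}. {x\<in>S. snd x = e i})"
        proof
          fix s assume sS: "s \<in> S"
          have "snd s \<in> e ` {0..<t}" using surj by simp
          then obtain i where "i \<in> {0..<t}" "snd s = e i" by blast
          then show "s \<in> (\<Union>i\<in>{0..<t}. {x\<in>S. snd x = e i})" using sS by blast
        qed
      qed blast
      have inj: "inj_on e {0..<t}" using bij by (simp add: bij_betw_def)
      have "card (\<Union>i\<in>{0..<t}. {x\<in>S. snd x = e i}) = (\<Sum>i\<in>{0..<t}. card {x\<in>S. snd x = e i})"
      proof (rule card_UN_disjoint)
        show "\<forall>i\<in>{0..<t}. finite {x\<in>S. snd x = e i}" using finS by simp
        show "\<forall>i\<in>{0..<t}. \<forall>j\<in>{0..<t}. i \<noteq> j \<longrightarrow> {x\<in>S. snd x = e i} \<inter> {x\<in>S. snd x = e j} = {}"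
          using inj unfolding inj_on_def by auto
      qed simp
      then have "card S = (\<Sum>i\<in>{0..<t}. card {x\<in>S. snd x = e i})" using U by simp
      also have "\<dots> = (\<Sum>i<t. lam i)" using ty unfolding has_type_def
        by (simp add: atLeast0LessThan)
      finally show ?thesis using kdef by simp
    qed
    define a where "a s = int (fst s)" for s :: "nat \<times> 'h"
    define Tf where "Tf = {T. T \<subseteq> S \<and> int m dvd (\<Sum>s\<in>T. a s) \<and> (\<Sum>s\<in>T. snd s) = 0}"
    have "\<exists>x D. coprime D (int m) \<and> (\<forall>T\<in>Tf. (\<Sum>s\<in>T. x s) = 0) \<and> (\<forall>s\<in>S. int m dvd (x s - D * a s))"
      by (rule core[OF m0 finS]) (use primes cardS in \<open>auto simp: Tf_def\<close>)
    then obtain x D where cop: "coprime D (int m)" and xT: "\<And>T. T \<in> Tf \<Longrightarrow> (\<Sum>s\<in>T. x s) = 0"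
      and xc: "\<And>s. s \<in> S \<Longrightarrow> int m dvd (x s - D * a s)" by blast
    have canc: "int m dvd u" if "int m dvd D * u" for u
      using that cop by (simp add: coprime_commute coprime_dvd_mult_right_iff)
    have P1: "x s \<noteq> x s'" if "s \<in> S" "s' \<in> S" "s \<noteq> s'" "snd s = snd s'" for s s'
    proof
      assume "x s = x s'"
      then have "int m dvd D * (a s - a s')"
        using dvd_diff[OF xc[OF that(2)] xc[OF that(1)]] by (simp add: algebra_simps)
      then have "int m dvd (a s - a s')" by (rule canc)
      moreover have "\<bar>a s - a s'\<bar> < int m" using Sm(1)[OF that(1)] Sm(1)[OF that(2)] unfolding a_def by linarith
      ultimately have "a s - a s' = 0" by (rule small_dvd)
      then have "a s = a s'" by simp
      then have "fst s = fst s'" unfolding a_def by simp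
      then show False using that by (simp add: prod_eq_iff)
    qed
    have P2: "x s \<noteq> 0" if "s \<in> S" "snd s = 0" for s
    proof
      assume "x s = 0"
      then have "int m dvd D * a s" using xc[OF that(1)] by simp
      then have "int m dvd a s" by (rule canc)
      moreover have "\<bar>a s\<bar> < int m" using Sm(1)[OF that(1)] unfolding a_def by simp
      ultimately have "a s = 0" by (rule small_dvd)
      then have "fst s = 0" unfolding a_def by simp
      then show False using that Sm(2)[OF that(1)] by (simp add: prod_eq_iff)
    qed
    have P3: "(\<Sum>s\<in>S. x s) \<noteq> 0" if "(\<Sum>s\<in>S. snd s) = 0"
    proof
      assume sx: "(\<Sum>s\<in>S. x s) = 0"
      have "int m dvd (\<Sum>s\<in>S. x s - D * a s)" using xc by (intro dvd_sum) auto
      then have "int m dvd D * (\<Sum>s\<in>S. a s)" using sx by (simp add: sum_subtractf sum_distrib_left)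
      then have "int m dvd (\<Sum>s\<in>S. a s)" by (rule canc)
      then have "m dvd (\<Sum>s\<in>S. fst s)" unfolding a_def of_nat_sum[symmetric] int_dvd_int_iff .
      then show False using nz that unfolding nonzero_sum_def by auto
    qed
    define B where "B = (\<Sum>s\<in>S. \<bar>x s\<bar>)"
    have xB: "\<bar>x s\<bar> \<le> B" if "s \<in> S" for s
      unfolding B_def using finS that by (intro member_le_sum) auto
    have sB: "\<bar>\<Sum>s\<in>S. x s\<bar> \<le> B" unfolding B_def by (rule sum_abs)
    obtain p where pP: "p \<in> {p::nat. prime p \<and>
           (\<forall>S. S \<subseteq> nonzero_elems p \<and> nonzero_sum p S \<and> has_type e t lam S
                \<longrightarrow> sequenceable p S)}" and pB: "p > nat (2 * B)"
      using infP unfolding infinite_nat_iff_unbounded by blast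
    have pprime: "prime p" and hp: "\<And>S. S \<subseteq> nonzero_elems p \<Longrightarrow> nonzero_sum p S \<Longrightarrow> has_type e t lam S
                \<Longrightarrow> sequenceable p S" using pP by auto
    have p0: "p > 0" using pprime prime_gt_0_nat by blast
    have pB': "2 * B < int p" using pB by linarith
    have B0: "0 \<le> B" unfolding B_def by simp
    define g where "g s = (nat (x s mod int p), snd s)" for s
    have gI: "inj_on g S"
    proof (rule inj_onI)
      fix s s' assume ss: "s \<in> S" "s' \<in> S" "g s = g s'"
      then have sn: "snd s = snd s'" and "nat (x s mod int p) = nat (x s' mod int p)" unfolding g_def by auto
      moreover have "0 \<le> x s mod int p" "0 \<le> x s' mod int p" using p0 by simp_all
      ultimately have "x s mod int p = x s' mod int p" using eq_nat_nat_iff by metis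
      then have "int p dvd (x s - x s')" by (simp add: mod_eq_dvd_iff)
      moreover have "\<bar>x s - x s'\<bar> < int p" using xB[OF ss(1)] xB[OF ss(2)] pB' by linarith
      ultimately have "x s - x s' = 0" by (rule small_dvd)
      then have "x s = x s'" by simp
      then show "s = s'" using P1 ss sn by blast
    qed
    define S' where "S' = g ` S"
    have S'sub: "S' \<subseteq> nonzero_elems p"
    proof
      fix y assume "y \<in> S'"
      then obtain s where s: "s \<in> S" "y = g s" unfolding S'_def by blast
      have "fst y < p" using s p0 unfolding g_def by (simp add: nat_less_iff)
      moreover have "y \<noteq> (0,0)"
      proof
        assume "y = (0,0)"
        then have sn: "snd s = 0" and "nat (x s mod int p) = 0" using s unfolding g_def by auto
        moreover have "0 \<le> x s mod int p" using p0 by simp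
        ultimately have "x s mod int p = 0" by linarith
        then have "int p dvd x s" by auto
        moreover have "\<bar>x s\<bar> < int p" using xB[OF s(1)] pB' B0 by linarith
        ultimately have "x s = 0" by (rule small_dvd)
        then show False using P2 s sn by blast
      qed
      ultimately show "y \<in> nonzero_elems p" unfolding nonzero_elems_def by (cases y) auto
    qed
    have sum_snd: "(\<Sum>y\<in>S'. snd y) = (\<Sum>s\<in>S. snd s)"
    proof -
      have "(\<Sum>y\<in>S'. snd y) = (\<Sum>s\<in>S. snd (g s))" unfolding S'_def using sum.reindex[OF gI] by (simp add: comp_def)
      then show ?thesis by (simp add: g_def)
    qed
    have sum_fst: "int ((\<Sum>y\<in>T'. fst y) mod p) = (\<Sum>s\<in>T. x s) mod int p" if "T \<subseteq> S" "T' = g ` T" for T T'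
    proof -
      have inj: "inj_on g T" using gI that(1) inj_on_subset by blast
      have "(\<Sum>y\<in>T'. fst y) = (\<Sum>s\<in>T. fst (g s))" using that(2) sum.reindex[OF inj] by (simp add: comp_def)
      also have "\<dots> = (\<Sum>s\<in>T. nat (x s mod int p))" by (simp add: g_def)
      finally have "(\<Sum>y\<in>T'. fst y) = (\<Sum>s\<in>T. nat (x s mod int p))" .
      then show ?thesis using sum_nat_mod[OF p0] by simp
    qed
    have nz': "nonzero_sum p S'"
    proof (cases "(\<Sum>s\<in>S. snd s) = 0")
      case False then show ?thesis unfolding nonzero_sum_def using sum_snd by simp
    next
      case True
      have "(\<Sum>s\<in>S. x s) \<noteq> 0" using P3 True by blast
      moreover have "\<bar>\<Sum>s\<in>S. x s\<bar> < int p" using sB pB' B0 by linarith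
      ultimately have "\<not> int p dvd (\<Sum>s\<in>S. x s)" using small_dvd[of p "\<Sum>s\<in>S. x s"] by blast
      then have "(\<Sum>s\<in>S. x s) mod int p \<noteq> 0" by auto
      then have "int ((\<Sum>y\<in>S'. fst y) mod p) \<noteq> 0" using sum_fst[of S S'] S'_def by simp
      then show ?thesis unfolding nonzero_sum_def by auto
    qed
    have ty': "has_type e t lam S'"
      unfolding has_type_def
    proof (intro allI impI)
      fix i assume "i < t"
      have "{y\<in>S'. snd y = e i} = g ` {s\<in>S. snd s = e i}" unfolding S'_def g_def by auto
      moreover have "inj_on g {s\<in>S. snd s = e i}" using gI by (rule inj_on_subset) auto
      ultimately have "card {y\<in>S'. snd y = e i} = card {s\<in>S. snd s = e i}" by (simp add: card_image)
      then show "card {y\<in>S'. snd y = e i} = lam i" using ty \<open>i < t\<close> unfolding has_type_def by simp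
    qed
    obtain ys where ys: "distinct ys" "set ys = S'" and ysq: "is_sequencing p ys \<or> is_rotational_sequencing p ys"
      using hp[OF S'sub nz' ty'] unfolding sequenceable_def by blast
    have tot: "zsum p ys = ((\<Sum>y\<in>S'. fst y) mod p, \<Sum>y\<in>S'. snd y)"
      unfolding zsum_def using ys by (simp add: sum_list_set)
    have notrot: "\<not> is_rotational_sequencing p ys"
      unfolding is_rotational_sequencing_def psums_def using tot nz' unfolding nonzero_sum_def by simp
    define h where "h = the_inv_into S g"
    define xs where "xs = map h ys"
    have ysxs: "ys = map g xs"
    proof -
      have "g (h y) = y" if "y \<in> set ys" for y
        unfolding h_def using that ys(2) S'_def f_the_inv_into_f[OF gI] by auto
      then show ?thesis unfolding xs_def by (simp add: map_idI)
    qed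
    have xsS: "set xs = S"
    proof -
      have "set xs = h ` g ` S" unfolding xs_def using ys(2) S'_def by simp
      also have "\<dots> = (\<lambda>s. h (g s)) ` S" by (simp add: image_image)
      also have "\<dots> = id ` S"
        by (rule image_cong) (simp_all add: h_def the_inv_into_f_f[OF gI])
      finally show ?thesis by simp
    qed
    have dxs: "distinct xs" using ys(1) ysxs by (simp add: distinct_map)
    have lxs: "length xs = length ys" using ysxs by simp
    have "\<not> is_sequencing m xs" using ns dxs xsS unfolding sequenceable_def by blast
    then obtain i j where ij: "i < j" "j < length xs + 1" and eqm: "psums m xs i = psums m xs j"
      unfolding is_sequencing_def using not_distinct_pair by blast
    define blk where "blk = drop i (take j xs)"
    have blkeq: "(\<Sum>x\<leftarrow>blk. fst x) mod m = 0 \<and> (\<Sum>x\<leftarrow>blk. snd x) = 0"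
      using eqm psums_eq_iff[of i j m xs] ij blk_def by simp
    have dblk: "distinct blk" unfolding blk_def using dxs by (simp add: distinct_take distinct_drop)
    have blkS: "set blk \<subseteq> S" unfolding blk_def using xsS by (metis set_drop_subset set_take_subset order_trans)
    have "set blk \<in> Tf"
    proof -
      have "(\<Sum>s\<in>set blk. fst s) mod m = 0" "(\<Sum>s\<in>set blk. snd s) = 0"
        using blkeq dblk by (simp_all add: sum_list_set)
      then have "m dvd (\<Sum>s\<in>set blk. fst s)" by (simp add: mod_eq_0_iff_dvd)
      then have "int m dvd (\<Sum>s\<in>set blk. a s)" unfolding a_def of_nat_sum[symmetric] int_dvd_int_iff .
      then show ?thesis unfolding Tf_def using blkS \<open>(\<Sum>s\<in>set blk. snd s) = 0\<close> by blast
    qed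
    then have bx: "(\<Sum>s\<in>set blk. x s) = 0" by (rule xT)
    have yblk: "drop i (take j ys) = map g blk" unfolding blk_def ysxs by (simp add: drop_map take_map)
    have "(\<Sum>y\<leftarrow>drop i (take j ys). fst y) mod p = 0 \<and> (\<Sum>y\<leftarrow>drop i (take j ys). snd y) = 0"
    proof
      have dgb: "distinct (map g blk)" using yblk ys(1) by (metis distinct_drop distinct_take)
      have "(\<Sum>y\<leftarrow>map g blk. fst y) = (\<Sum>y\<in>g ` set blk. fst y)" using sum_list_set[OF dgb, of fst] by (simp only: set_map)
      then have "int ((\<Sum>y\<leftarrow>map g blk. fst y) mod p) = (\<Sum>s\<in>set blk. x s) mod int p"
        using sum_fst[OF blkS refl] by simp
      then show "(\<Sum>y\<leftarrow>drop i (take j ys). fst y) mod p = 0" using bx yblk by simp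
      have "(\<Sum>y\<leftarrow>map g blk. snd y) = (\<Sum>x\<leftarrow>blk. snd x)" by (simp add: g_def comp_def)
      then show "(\<Sum>y\<leftarrow>drop i (take j ys). snd y) = 0" using blkeq yblk by simp
    qed
    then have peq: "psums p ys i = psums p ys j" using psums_eq_iff[of i j p ys] ij by simp
    have "is_sequencing p ys" using ysq notrot by blast
    then have "inj_on (psums p ys) (set [0..<length ys + 1])" unfolding is_sequencing_def
      by (simp only: distinct_map)
    then have "inj_on (psums p ys) {0..<length ys + 1}" by (simp only: set_upt)
    then have "i = j" by (rule inj_onD[where f="psums p ys" and x=i and y=j, OF _ peq]) (use ij lxs in auto)
    then show False using ij by simp
  qed
qed

end
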